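(* Let $\mathcal H$ be a separable complex Hilbert space, $A_1,A_2\in L(\mathcal H)^+$, $B\in L(\mathcal H)$ with closed range. The following are equivalent: (1) there exists $G\in L(\mathcal H)$ with $BG\in\Pi(A_1,R(B))$ and $I-GB\in\Pi(A_2,N(B))$; (2) the pairs $(A_1,R(B))$ and $(A_2,N(B))$ are compatible; (3) $B$ admits a weighted generalized inverse, i.e. there exists $C\in L(\mathcal H)$ with $BCB=B$, $CBC=C$, $A_1BC=(BC)^*A_1$, $A_2CB=(CB)^*A_2$.
   Context: For $A\in L(\mathcal H)^+$ and a closed subspace $\mathcal S$, $\|z\|_A=\langle Az,z\rangle^{1/2}$ and $\Pi(A,\mathcal S)$ is the set of $T\in L(\mathcal H)$ with $R(T)\subseteq\mathcal S$ and $\|y-Ty\|_A\le\|y-s\|_A$ for all $y\in\mathcal H$, $s\in\mathcal S$. The pair $(A,\mathcal S)$ is compatible if there exists $Q\in L(\mathcal H)$ with $Q^2=Q$, $R(Q)=\mathcal S$, $AQ=Q^*A$. $N(\cdot)$ denotes nullspace. *)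

theory Defs
  imports "HOL-Analysis.Analysis"
begin

text \<open>The distribution has no complex Hilbert spaces, so we introduce them as a type class.\<close>

class complex_inner_space = real_normed_vector +
  fixes cscale :: "complex \<Rightarrow> 'a \<Rightarrow> 'a"
    and cinner :: "'a \<Rightarrow> 'a \<Rightarrow> complex"
  assumes cscale_add_right: "cscale a (x + y) = cscale a x + cscale a y"
    and cscale_add_left: "cscale (a + b) x = cscale a x + cscale b x"
    and cscale_cscale: "cscale a (cscale b x) = cscale (a * b) x"
    and cscale_one: "cscale 1 x = x"
    and scaleR_cscale: "scaleR r x = cscale (complex_of_real r) x"
    and cinner_commute: "cinner x y = cnj (cinner y x)"
    and cinner_add_left: "cinner (x + y) z = cinner x z + cinner y z"
    and cinner_cscale_left: "cinner (cscale a x) y = a * cinner x y"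
    and norm_eq_sqrt_cinner: "norm x = sqrt (Re (cinner x x))"

class chilbert_space = complex_inner_space + complete_space

definition separable_space :: "'a::topological_space itself \<Rightarrow> bool" where
  "separable_space _ \<longleftrightarrow> (\<exists>D::'a set. countable D \<and> closure D = UNIV)"

definition bounded_op :: "('a::complex_inner_space \<Rightarrow> 'a) \<Rightarrow> bool" where
  "bounded_op T \<longleftrightarrow> (\<forall>x y. T (x + y) = T x + T y) \<and> (\<forall>c x. T (cscale c x) = cscale c (T x))
     \<and> (\<exists>K. \<forall>x. norm (T x) \<le> norm x * K)"

definition adj :: "('a::complex_inner_space \<Rightarrow> 'a) \<Rightarrow> ('a \<Rightarrow> 'a)" where
  "adj T = (THE S. \<forall>x y. cinner (T x) y = cinner x (S y))"

definition positive_op :: "('a::complex_inner_space \<Rightarrow> 'a) \<Rightarrow> bool" where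
  "positive_op A \<longleftrightarrow> bounded_op A \<and> (\<forall>x. Im (cinner (A x) x) = 0 \<and> 0 \<le> Re (cinner (A x) x))"

definition ker :: "('a::complex_inner_space \<Rightarrow> 'a) \<Rightarrow> 'a set" where
  "ker T = {x. T x = 0}"

definition Anorm :: "('a::complex_inner_space \<Rightarrow> 'a) \<Rightarrow> 'a \<Rightarrow> real" where
  "Anorm A z = sqrt (Re (cinner (A z) z))"

definition PiSet :: "('a::complex_inner_space \<Rightarrow> 'a) \<Rightarrow> 'a set \<Rightarrow> ('a \<Rightarrow> 'a) set" where
  "PiSet A S = {T. bounded_op T \<and> range T \<subseteq> S \<and>
      (\<forall>y s. s \<in> S \<longrightarrow> Anorm A (y - T y) \<le> Anorm A (y - s))}"

definition compatible :: "('a::complex_inner_space \<Rightarrow> 'a) \<Rightarrow> 'a set \<Rightarrow> bool" where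
  "compatible A S \<longleftrightarrow> (\<exists>Q. bounded_op Q \<and> Q \<circ> Q = Q \<and> range Q = S \<and> A \<circ> Q = adj Q \<circ> A)"

end

theory Submission
  imports Defs "HOL-Analysis.Analysis"
begin



lemma cscale_zero_left[simp]:
  fixes x y z :: "'a::complex_inner_space"
  shows "cscale 0 x = 0"
  by (metis scaleR_cscale scaleR_zero_left of_real_0)

lemma cscale_zero_right[simp]:
  fixes x y z :: "'a::complex_inner_space"
  shows "cscale a 0 = 0"
  using cscale_add_right[of a 0 0] by simp

lemma cscale_minus_left:
  fixes x y z :: "'a::complex_inner_space"
  shows "cscale (- a) x = - cscale a x"
  by (metis cscale_add_left cscale_zero_left add.right_inverse add.commute eq_neg_iff_add_eq_0)

lemma cscale_minus_right:
  fixes x y z :: "'a::complex_inner_space"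
  shows "cscale a (- x) = - cscale a x"
  by (metis cscale_add_right cscale_zero_right add.right_inverse add.commute eq_neg_iff_add_eq_0)

lemma cscale_diff_right:
  fixes x y z :: "'a::complex_inner_space"
  shows "cscale a (x - y) = cscale a x - cscale a y"
  using cscale_add_right[of a x "-y"] cscale_minus_right by simp

lemma cscale_diff_left:
  fixes x y z :: "'a::complex_inner_space"
  shows "cscale (a - b) x = cscale a x - cscale b x"
  using cscale_add_left[of a "-b" x] cscale_minus_left by simp

lemma cinner_add_right:
  fixes x y z :: "'a::complex_inner_space"
  shows "cinner x (y + z) = cinner x y + cinner x z"
  by (metis cinner_commute cinner_add_left complex_cnj_add)

lemma cinner_cscale_right:
  fixes x y z :: "'a::complex_inner_space"
  shows "cinner x (cscale a y) = cnj a * cinner x y"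
  by (metis cinner_commute cinner_cscale_left complex_cnj_mult)

lemma cinner_zero_left[simp]:
  fixes x y z :: "'a::complex_inner_space"
  shows "cinner 0 x = 0"
  using cinner_add_left[of 0 0 x] by simp

lemma cinner_zero_right[simp]:
  fixes x y z :: "'a::complex_inner_space"
  shows "cinner x 0 = 0"
  using cinner_add_right[of x 0 0] by simp

lemma cinner_minus_left:
  fixes x y z :: "'a::complex_inner_space"
  shows "cinner (- x) y = - cinner x y"
  by (metis cinner_add_left cinner_zero_left add.right_inverse add.commute eq_neg_iff_add_eq_0)

lemma cinner_minus_right:
  fixes x y z :: "'a::complex_inner_space"
  shows "cinner x (- y) = - cinner x y"
  by (metis cinner_add_right cinner_zero_right add.right_inverse add.commute eq_neg_iff_add_eq_0)

lemma cinner_diff_left: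
  fixes x y z :: "'a::complex_inner_space"
  shows "cinner (x - y) z = cinner x z - cinner y z"
  using cinner_add_left[of x "-y" z] cinner_minus_left by simp

lemma cinner_diff_right:
  fixes x y z :: "'a::complex_inner_space"
  shows "cinner x (y - z) = cinner x y - cinner x z"
  using cinner_add_right[of x y "-z"] cinner_minus_right by simp

lemma cinner_scaleR_left:
  fixes x y z :: "'a::complex_inner_space"
  shows "cinner (scaleR r x) y = of_real r * cinner x y"
  by (simp add: scaleR_cscale cinner_cscale_left)

lemma cinner_scaleR_right:
  fixes x y z :: "'a::complex_inner_space"
  shows "cinner x (scaleR r y) = of_real r * cinner x y"
  by (simp add: scaleR_cscale cinner_cscale_right)

lemma cinner_self_Im:
  fixes x y z :: "'a::complex_inner_space"
  shows "Im (cinner x x) = 0"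
  using cinner_commute[of x x] by (metis Im_complex_of_real Reals_cnj_iff complex_is_Real_iff)

lemma cinner_self_Re:
  fixes x y z :: "'a::complex_inner_space"
  shows "Re (cinner x x) = (norm x)^2"
proof -
  have "0 \<le> sqrt (Re (cinner x x))" using norm_eq_sqrt_cinner[of x] by (metis norm_ge_zero)
  hence "0 \<le> Re (cinner x x)" by (simp add: real_sqrt_ge_0_iff)
  thus ?thesis using norm_eq_sqrt_cinner[of x] by (simp add: real_sqrt_pow2)
qed

lemma cinner_self:
  fixes x y z :: "'a::complex_inner_space"
  shows "cinner x x = of_real ((norm x)^2)"
  by (rule complex_eqI) (simp_all add: cinner_self_Im[of x] cinner_self_Re[of x])

lemma cinner_self_eq_0[simp]:
  fixes x y z :: "'a::complex_inner_space"
  shows "cinner x x = 0 \<longleftrightarrow> x = 0"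
  by (simp add: cinner_self)

lemma cinner_ext:
  fixes x y z :: "'a::complex_inner_space"
  shows "(\<And>z. cinner z x = cinner z y) \<Longrightarrow> x = y"
  by (metis cinner_diff_right cinner_self_eq_0 eq_iff_diff_eq_0)

lemma cinner_ext_left:
  fixes x y z :: "'a::complex_inner_space"
  shows "(\<And>z. cinner x z = cinner y z) \<Longrightarrow> x = y"
  by (metis cinner_diff_left cinner_self_eq_0 eq_iff_diff_eq_0)

lemma norm_sq_Re:
  fixes x y z :: "'a::complex_inner_space"
  shows "(norm x)^2 = Re (cinner x x)"
  by (simp add: cinner_self_Re)

lemma cauchy_schwarz:
  fixes x y z :: "'a::complex_inner_space"
  shows "cmod (cinner x y) \<le> norm x * norm y"
proof (cases "y = 0")
  case True thus ?thesis by simp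
next
  case False
  define n where "n = (norm y)^2"
  have n: "n > 0" using False by (simp add: n_def)
  define a where "a = cinner x y"
  define t where "t = a / of_real n"
  have yy: "cinner y y = of_real n" by (simp add: n_def cinner_self)
  have yx: "cinner y x = cnj a" by (simp add: a_def cinner_commute[of y x])
  have "cinner (x - cscale t y) (x - cscale t y)
     = cinner x x - cnj t * a - t * cnj a + t * cnj t * of_real n"
    by (simp add: cinner_diff_left cinner_diff_right cinner_cscale_left cinner_cscale_right
        yy yx a_def[symmetric] algebra_simps)
  also have "\<dots> = cinner x x - a * cnj a / of_real n"
    using n by (simp add: t_def field_simps)
  finally have "0 \<le> Re (cinner x x - a * cnj a / of_real n)"
    using cinner_self_Re[of "x - cscale t y"] by (metis zero_le_power2)
  hence "Re (a * cnj a) / n \<le> (norm x)^2"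
    by (simp add: cinner_self_Re Re_divide_of_real)
  hence "(cmod a)^2 \<le> (norm x)^2 * n" using n
    by (simp add: complex_norm_square[symmetric] divide_le_eq)
  hence "(cmod a)^2 \<le> (norm x * norm y)^2" by (simp add: n_def power_mult_distrib)
  thus ?thesis unfolding a_def by (simp add: power2_le_iff_abs_le)
qed

lemma norm_add_sq:
  fixes x y z :: "'a::complex_inner_space"
  shows "(norm (x + y))^2 = (norm x)^2 + (norm y)^2 + 2 * Re (cinner x y)"
proof -
  have "Re (cinner y x) = Re (cinner x y)" by (subst cinner_commute) simp
  thus ?thesis by (simp add: norm_sq_Re cinner_add_left cinner_add_right)
qed

lemma norm_diff_sq:
  fixes x y z :: "'a::complex_inner_space"
  shows "(norm (x - y))^2 = (norm x)^2 + (norm y)^2 - 2 * Re (cinner x y)"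
  using norm_add_sq[of x "-y"] by (simp add: cinner_minus_right)

lemma parallelogram:
  fixes x y z :: "'a::complex_inner_space"
  shows "(norm (x + y))^2 + (norm (x - y))^2 = 2 * (norm x)^2 + 2 * (norm y)^2"
  using norm_add_sq[of x y] norm_diff_sq[of x y] by linarith

lemma bounded_linear_cinner_left:
  fixes x y z :: "'a::complex_inner_space"
  shows "bounded_linear (\<lambda>x. cinner x y)"
proof (rule bounded_linear_intro[where K="norm y"])
  show "\<And>x ya. cinner (x + ya) y = cinner x y + cinner ya y" by (simp add: cinner_add_left)
  show "\<And>r x. cinner (r *\<^sub>R x) y = r *\<^sub>R cinner x y" by (simp add: cinner_scaleR_left scaleR_conv_of_real)
  show "\<And>x. cmod (cinner x y) \<le> norm x * norm y" by (simp add: cauchy_schwarz)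
qed


lemma bop_add: "bounded_op T \<Longrightarrow> T (x + y) = T x + T y"
  by (simp add: bounded_op_def)
lemma bop_cscale: "bounded_op T \<Longrightarrow> T (cscale c x) = cscale c (T x)"
  by (simp add: bounded_op_def)
lemma bop_bl: "bounded_op T \<Longrightarrow> bounded_linear T"
proof -
  assume T: "bounded_op T"
  then obtain K where K: "\<And>x. norm (T x) \<le> norm x * K" by (auto simp: bounded_op_def)
  show ?thesis
  proof (rule bounded_linear_intro[OF _ _ K])
    show "\<And>x y. T (x + y) = T x + T y" using T by (simp add: bop_add)
    show "\<And>r x. T (r *\<^sub>R x) = r *\<^sub>R T x" using T by (simp add: scaleR_cscale bop_cscale)
  qed
qed
lemma bop_zero: "bounded_op T \<Longrightarrow> T 0 = 0"
  using bop_bl linear_simps(3) bounded_linear.linear by blast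
lemma bop_diff: "bounded_op T \<Longrightarrow> T (x - y) = T x - T y"
  by (metis bop_bl bounded_linear.linear linear_diff)
lemma bop_minus: "bounded_op T \<Longrightarrow> T (- x) = - T x"
  by (metis bop_bl bounded_linear.linear linear_neg)

lemma bop_intro:
  assumes "\<And>x y. T (x + y) = T x + T y" "\<And>c x. T (cscale c x) = cscale c (T x)" "bounded_linear T"
  shows "bounded_op T"
proof -
  obtain K where "\<And>x. norm (T x) \<le> norm x * K" using bounded_linear.bounded[OF assms(3)] by blast
  thus ?thesis using assms unfolding bounded_op_def by blast
qed

lemma bop_comp: "bounded_op S \<Longrightarrow> bounded_op T \<Longrightarrow> bounded_op (\<lambda>x. S (T x))"
  by (rule bop_intro) (simp_all add: bop_add bop_cscale bounded_linear_compose[OF bop_bl bop_bl, unfolded o_def])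
lemma bop_comp': "bounded_op S \<Longrightarrow> bounded_op T \<Longrightarrow> bounded_op (S \<circ> T)"
  using bop_comp[of S T] by (simp add: o_def)
lemma bop_id: "bounded_op (\<lambda>x. x)"
  by (rule bop_intro) (simp_all add: bounded_linear_ident)
lemma bop_sub: "bounded_op S \<Longrightarrow> bounded_op T \<Longrightarrow> bounded_op (\<lambda>x. S x - T x)"
  by (rule bop_intro) (simp_all add: bop_add bop_cscale cscale_diff_right bounded_linear_sub bop_bl)
lemma bop_plus: "bounded_op S \<Longrightarrow> bounded_op T \<Longrightarrow> bounded_op (\<lambda>x. S x + T x)"
  by (rule bop_intro) (simp_all add: bop_add bop_cscale cscale_add_right bounded_linear_add bop_bl)

definition csubspace :: "'a::complex_inner_space set \<Rightarrow> bool" where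
  "csubspace S \<longleftrightarrow> 0 \<in> S \<and> (\<forall>x\<in>S. \<forall>y\<in>S. x + y \<in> S) \<and> (\<forall>c. \<forall>x\<in>S. cscale c x \<in> S)"

lemma csub_zero: "csubspace S \<Longrightarrow> 0 \<in> S" by (simp add: csubspace_def)
lemma csub_add: "csubspace S \<Longrightarrow> x \<in> S \<Longrightarrow> y \<in> S \<Longrightarrow> x + y \<in> S" by (simp add: csubspace_def)
lemma csub_cscale: "csubspace S \<Longrightarrow> x \<in> S \<Longrightarrow> cscale c x \<in> S" by (simp add: csubspace_def)
lemma csub_minus: "csubspace S \<Longrightarrow> x \<in> S \<Longrightarrow> - x \<in> S"
  using csub_cscale[of S x "-1"] by (simp add: cscale_minus_left cscale_one)
lemma csub_diff: "csubspace S \<Longrightarrow> x \<in> S \<Longrightarrow> y \<in> S \<Longrightarrow> x - y \<in> S"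
  using csub_add[of S x "-y"] csub_minus[of S y] by simp
lemma csub_scaleR: "csubspace S \<Longrightarrow> x \<in> S \<Longrightarrow> scaleR r x \<in> S"
  by (simp add: scaleR_cscale csub_cscale)

lemma csub_range: "bounded_op T \<Longrightarrow> csubspace (range T)"
proof -
  assume T: "bounded_op T"
  have "0 \<in> range T" using bop_zero[OF T] by (metis rangeI)
  moreover have "x + y \<in> range T" if hxy: "x \<in> range T" "y \<in> range T" for x y
  proof -
    obtain a b where "x = T a" "y = T b" using hxy by blast
    hence "x + y = T (a + b)" using bop_add[OF T] by simp
    thus ?thesis by blast
  qed
  moreover have "cscale c x \<in> range T" if hx: "x \<in> range T" for x c
  proof -
    obtain a where "x = T a" using hx by blast
    hence "cscale c x = T (cscale c a)" using bop_cscale[OF T] by simp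
    thus ?thesis by blast
  qed
  ultimately show ?thesis unfolding csubspace_def by blast
qed
lemma csub_ker: "bounded_op T \<Longrightarrow> csubspace (ker T)"
  unfolding csubspace_def ker_def by (simp add: bop_add bop_cscale bop_zero)
lemma closed_ker: "bounded_op T \<Longrightarrow> closed (ker T)"
proof -
  assume "bounded_op T"
  hence "continuous_on UNIV T" using bop_bl linear_continuous_on by blast
  thus ?thesis unfolding ker_def by (intro closed_Collect_eq) (auto intro: continuous_intros)
qed

lemma positive_herm:
  assumes "positive_op A"
  shows "cinner (A x) y = cinner x (A y)"
proof -
  have bA: "bounded_op A" and im: "\<And>z. Im (cinner (A z) z) = 0" using assms by (auto simp: positive_op_def)
  define p where "p = cinner (A x) y"
  define q where "q = cinner (A y) x"
  have "cinner (A (x + y)) (x + y) = cinner (A x) x + cinner (A y) y + p + q"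
    by (simp add: bop_add[OF bA] cinner_add_left cinner_add_right p_def q_def)
  hence 1: "Im p + Im q = 0" using im[of "x+y"] im[of x] im[of y] by simp
  have "cinner (A (x + cscale \<i> y)) (x + cscale \<i> y) = cinner (A x) x + cinner (A y) y - \<i> * p + \<i> * q"
    by (simp add: bop_add[OF bA] bop_cscale[OF bA] cinner_add_left cinner_add_right
        cinner_cscale_left cinner_cscale_right p_def q_def algebra_simps)
  hence 2: "Re q - Re p = 0" using im[of "x+ cscale \<i> y"] im[of x] im[of y] by simp
  have "q = cnj p" using 1 2 by (simp add: complex_eq_iff)
  thus ?thesis unfolding p_def q_def by (metis cinner_commute complex_cnj_cnj)
qed

lemma positive_Re: "positive_op A \<Longrightarrow> 0 \<le> Re (cinner (A x) x)"
  by (simp add: positive_op_def)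

lemma variational_Re:
  assumes A: "positive_op A" and S: "csubspace S" and s: "s \<in> S"
    and min: "\<And>s. s \<in> S \<Longrightarrow> Re (cinner (A u) u) \<le> Re (cinner (A (u - s)) (u - s))"
  shows "Re (cinner (A u) s) = 0"
proof -
  have bA: "bounded_op A" using A by (simp add: positive_op_def)
  define a where "a = Re (cinner (A u) s)"
  define b where "b = Re (cinner (A s) s)"
  have b0: "b \<ge> 0" using positive_Re[OF A] by (simp add: b_def)
  have key: "0 \<le> t * t * b - 2 * t * a" for t :: real
  proof -
    have "cinner (A (u - scaleR t s)) (u - scaleR t s)
        = cinner (A u) u - of_real t * cinner (A u) s - of_real t * cinner (A s) u
          + of_real t * of_real t * cinner (A s) s"
      by (simp add: bop_diff[OF bA] scaleR_cscale bop_cscale[OF bA] cinner_diff_left cinner_diff_right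
          cinner_cscale_left cinner_cscale_right algebra_simps)
    moreover have "cinner (A s) u = cnj (cinner (A u) s)"
      using positive_herm[OF A, of s u] cinner_commute[of s "A u"] by simp
    ultimately have "Re (cinner (A (u - scaleR t s)) (u - scaleR t s)) = Re (cinner (A u) u) - 2 * t * a + t * t * b"
      by (simp add: a_def b_def)
    moreover have "Re (cinner (A u) u) \<le> Re (cinner (A (u - scaleR t s)) (u - scaleR t s))"
      using min csub_scaleR[OF S s] by blast
    ultimately show ?thesis by linarith
  qed
  define t where "t = a / (b + 1)"
  have ta: "t * (b + 1) = a" using b0 by (simp add: t_def)
  have "0 \<le> t * t * b - 2 * t * (t * (b + 1))" using key[of t] ta by simp
  hence "t * t * (b + 2) \<le> 0" by (simp add: algebra_simps)
  moreover have "t * t * (b + 2) \<ge> 0" using b0 by simp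
  ultimately have "t * t * (b + 2) = 0" by linarith
  hence "t = 0" using b0 by simp
  thus ?thesis using ta a_def by simp
qed

lemma variational:
  assumes A: "positive_op A" and S: "csubspace S" and s: "s \<in> S"
    and min: "\<And>s. s \<in> S \<Longrightarrow> Re (cinner (A u) u) \<le> Re (cinner (A (u - s)) (u - s))"
  shows "cinner (A u) s = 0"
proof -
  have 1: "Re (cinner (A u) s) = 0" using variational_Re[OF A S s min] .
  have "Re (cinner (A u) (cscale \<i> s)) = 0" using variational_Re[OF A S csub_cscale[OF S s] min] .
  hence 2: "Im (cinner (A u) s) = 0" by (simp add: cinner_cscale_right)
  show ?thesis using 1 2 by (simp add: complex_eq_iff)
qed

lemma positive_id: "positive_op (\<lambda>x::'a::complex_inner_space. x)"
  by (simp add: positive_op_def bop_id cinner_self_Im cinner_self_Re)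


lemma minimizer_exists:
  fixes S :: "'a::chilbert_space set"
  assumes cl: "closed S" and S: "csubspace S"
  shows "\<exists>p\<in>S. \<forall>s\<in>S. norm (x - p) \<le> norm (x - s)"
proof -
  define D where "D = Inf ((\<lambda>s. (norm (x - s))^2) ` S)"
  have ne: "(\<lambda>s. (norm (x - s))^2) ` S \<noteq> {}" using csub_zero[OF S] by blast
  have bdd: "bdd_below ((\<lambda>s. (norm (x - s))^2) ` S)" by (rule bdd_belowI[of _ 0]) auto
  have Dle: "D \<le> (norm (x - s))^2" if "s \<in> S" for s
    unfolding D_def using bdd that by (auto intro: cInf_lower)
  have "\<exists>s\<in>S. (norm (x - s))^2 < D + inverse (real (Suc n))" for n
  proof -
    have "D < D + inverse (real (Suc n))" by simp
    then obtain v where "v \<in> (\<lambda>s. (norm (x - s))^2) ` S" "v < D + inverse (real (Suc n))"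
      using cInf_lessD[OF ne] unfolding D_def by blast
    thus ?thesis by blast
  qed
  then obtain sq where sqS: "\<And>n. sq n \<in> S" and sqD: "\<And>n. (norm (x - sq n))^2 < D + inverse (real (Suc n))"
    by metis
  have par: "(norm (sq m - sq n))^2 \<le> 2 * inverse (real (Suc m)) + 2 * inverse (real (Suc n))" for m n
  proof -
    define a where "a = x - sq m"
    define b where "b = x - sq n"
    have mid: "scaleR (1/2) (sq m + sq n) \<in> S" using S sqS csub_add csub_scaleR by blast
    have "a + b = scaleR 2 (x - scaleR (1/2) (sq m + sq n))"
      by (simp add: a_def b_def algebra_simps scaleR_2)
    hence "(norm (a + b))^2 = 4 * (norm (x - scaleR (1/2) (sq m + sq n)))^2"
      by (simp add: power_mult_distrib)
    hence ab: "(norm (a + b))^2 \<ge> 4 * D" using Dle[OF mid] by simp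
    have "a - b = sq n - sq m" by (simp add: a_def b_def)
    hence "(norm (sq m - sq n))^2 = (norm (a - b))^2" by (simp add: norm_minus_commute)
    also have "\<dots> = 2 * (norm a)^2 + 2 * (norm b)^2 - (norm (a + b))^2"
      using parallelogram[of a b] by linarith
    finally show ?thesis using ab sqD[of m] sqD[of n] unfolding a_def b_def by linarith
  qed
  have "Cauchy sq"
  proof (rule metric_CauchyI)
    fix e :: real assume e: "e > 0"
    obtain M where M0: "real M > 4 / e^2" using reals_Archimedean2 by blast
    have M: "real (Suc M) > 4 / e^2" using M0 by simp
    have iM: "inverse (real (Suc M)) < e^2 / 4"
    proof -
      have "4 / e^2 > 0" using e by simp
      hence "inverse (real (Suc M)) < inverse (4 / e^2)" using M by (intro less_imp_inverse_less) auto
      thus ?thesis by simp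
    qed
    show "\<exists>M. \<forall>m\<ge>M. \<forall>n\<ge>M. dist (sq m) (sq n) < e"
    proof (intro exI allI impI)
      fix m n assume mn: "M \<le> m" "M \<le> n"
      have "inverse (real (Suc m)) \<le> inverse (real (Suc M))" using mn by (intro le_imp_inverse_le) auto
      moreover have "inverse (real (Suc n)) \<le> inverse (real (Suc M))" using mn by (intro le_imp_inverse_le) auto
      ultimately have "(norm (sq m - sq n))^2 < e^2" using par[of m n] iM by linarith
      hence "norm (sq m - sq n) < e" using e by (simp add: power_less_imp_less_base)
      thus "dist (sq m) (sq n) < e" by (simp add: dist_norm)
    qed
  qed
  then obtain p where lim: "sq \<longlonglongrightarrow> p" using convergent_eq_Cauchy by blast
  have pS: "p \<in> S" using closed_sequentially[OF cl sqS lim] .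
  have "norm (x - p) \<le> norm (x - s)" if sS: "s \<in> S" for s
  proof -
    have l1: "(\<lambda>n. (norm (x - sq n))^2) \<longlonglongrightarrow> (norm (x - p))^2"
      by (intro tendsto_intros lim)
    have l2: "(\<lambda>n. (norm (x - s))^2 + inverse (real (Suc n))) \<longlonglongrightarrow> (norm (x - s))^2 + 0"
      by (intro tendsto_intros LIMSEQ_inverse_real_of_nat)
    have "(norm (x - p))^2 \<le> (norm (x - s))^2 + 0"
    proof (rule LIMSEQ_le[OF l1 l2])
      have "(norm (x - sq n))^2 \<le> (norm (x - s))^2 + inverse (real (Suc n))" for n
        using sqD[of n] Dle[OF sS] by linarith
      thus "\<exists>N. \<forall>n\<ge>N. (norm (x - sq n))^2 \<le> (norm (x - s))^2 + inverse (real (Suc n))" by blast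
    qed
    thus ?thesis by (simp add: power2_le_iff_abs_le)
  qed
  thus ?thesis using pS by blast
qed

lemma proj_exists:
  fixes S :: "'a::chilbert_space set"
  assumes cl: "closed S" and S: "csubspace S"
  shows "\<exists>p\<in>S. \<forall>s\<in>S. cinner (x - p) s = 0"
proof -
  obtain p where pS: "p \<in> S" and pm: "\<And>s. s \<in> S \<Longrightarrow> norm (x - p) \<le> norm (x - s)"
    using minimizer_exists[OF cl S] by blast
  have "cinner (x - p) s = 0" if "s \<in> S" for s
  proof (rule variational[OF positive_id S that])
    fix s assume s: "s \<in> S"
    have "norm (x - p) \<le> norm (x - p - s)" using pm[of "p + s"] csub_add[OF S pS s] by (simp add: diff_diff_eq)
    hence "(norm (x - p))^2 \<le> (norm (x - p - s))^2" by (simp add: power_mono)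
    thus "Re (cinner (x - p) (x - p)) \<le> Re (cinner (x - p - s) (x - p - s))" by (simp add: norm_sq_Re)
  qed
  thus ?thesis using pS by blast
qed

definition proj :: "'a::complex_inner_space set \<Rightarrow> 'a \<Rightarrow> 'a" where
  "proj S x = (SOME p. p \<in> S \<and> (\<forall>s\<in>S. cinner (x - p) s = 0))"

lemma proj_prop:
  fixes S :: "'a::chilbert_space set"
  assumes "closed S" "csubspace S"
  shows "proj S x \<in> S \<and> (\<forall>s\<in>S. cinner (x - proj S x) s = 0)"
  unfolding proj_def using someI_ex[OF proj_exists[OF assms, of x, unfolded Bex_def]] .

lemma proj_unique:
  fixes S :: "'a::chilbert_space set"
  assumes cl: "closed S" and S: "csubspace S" and p: "p \<in> S" "\<And>s. s \<in> S \<Longrightarrow> cinner (x - p) s = 0"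
  shows "proj S x = p"
proof -
  have q: "proj S x \<in> S" "\<And>s. s \<in> S \<Longrightarrow> cinner (x - proj S x) s = 0" using proj_prop[OF cl S] by auto
  have d: "p - proj S x \<in> S" using csub_diff[OF S p(1) q(1)] .
  have "cinner (p - proj S x) (p - proj S x) = cinner (x - proj S x) (p - proj S x) - cinner (x - p) (p - proj S x)"
    by (simp add: cinner_diff_left)
  also have "\<dots> = 0" using q(2)[OF d] p(2)[OF d] by simp
  finally show ?thesis by simp
qed

lemma proj_id:
  fixes S :: "'a::chilbert_space set"
  assumes "closed S" "csubspace S" "s \<in> S" shows "proj S s = s"
  using proj_unique[OF assms(1,2) assms(3)] by simp

lemma proj_orth_zero:
  fixes S :: "'a::chilbert_space set"
  assumes "closed S" "csubspace S" "\<And>s. s \<in> S \<Longrightarrow> cinner w s = 0" shows "proj S w = 0"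
  using proj_unique[OF assms(1,2) csub_zero[OF assms(2)]] assms(3) by simp

lemma proj_bop:
  fixes S :: "'a::chilbert_space set"
  assumes cl: "closed S" and S: "csubspace S"
  shows "bounded_op (proj S)"
proof -
  note P = proj_prop[OF cl S]
  have add: "proj S (x + y) = proj S x + proj S y" for x y
  proof (rule proj_unique[OF cl S])
    show "proj S x + proj S y \<in> S" using P csub_add[OF S] by blast
    fix s assume s: "s \<in> S"
    have "x + y - (proj S x + proj S y) = (x - proj S x) + (y - proj S y)" by simp
    moreover have "cinner ((x - proj S x) + (y - proj S y)) s = 0" using P s by (simp add: cinner_add_left)
    ultimately show "cinner (x + y - (proj S x + proj S y)) s = 0" by (simp only:)
  qed
  have sc: "proj S (cscale c x) = cscale c (proj S x)" for c x
  proof (rule proj_unique[OF cl S])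
    show "cscale c (proj S x) \<in> S" using P csub_cscale[OF S] by blast
    fix s assume "s \<in> S"
    thus "cinner (cscale c x - cscale c (proj S x)) s = 0"
      using P by (simp add: cscale_diff_right[symmetric] cinner_cscale_left)
  qed
  have nb: "norm (proj S x) \<le> norm x * 1" for x
  proof -
    have o: "cinner (x - proj S x) (proj S x) = 0" using P by blast
    have "(norm x)^2 = (norm (proj S x + (x - proj S x)))^2" by simp
    also have "\<dots> = (norm (proj S x))^2 + (norm (x - proj S x))^2 + 2 * Re (cinner (proj S x) (x - proj S x))"
      by (rule norm_add_sq)
    also have "cinner (proj S x) (x - proj S x) = 0" using o cinner_commute[of "proj S x" "x - proj S x"] by simp
    finally have "(norm (proj S x))^2 \<le> (norm x)^2" by simp
    thus ?thesis by (simp add: power2_le_iff_abs_le)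
  qed
  show ?thesis unfolding bounded_op_def using add sc nb by blast
qed


lemma riesz:
  fixes f :: "'a::chilbert_space \<Rightarrow> complex"
  assumes add: "\<And>x y. f (x + y) = f x + f y" and sc: "\<And>c x. f (cscale c x) = c * f x"
    and cont: "continuous_on UNIV f"
  shows "\<exists>z. \<forall>x. f x = cinner x z"
proof (cases "\<forall>x. f x = 0")
  case True thus ?thesis by (intro exI[of _ 0]) simp
next
  case False
  then obtain x0 where x0: "f x0 \<noteq> 0" by blast
  define K where "K = {x. f x = 0}"
  have f0: "f 0 = 0" using sc[of 0 0] by simp
  have fminus: "f (x - y) = f x - f y" for x y
  proof -
    have "f x = f (x - y) + f y" using add[of "x - y" y] by simp
    thus ?thesis by simp
  qed
  have clK: "closed K" unfolding K_def by (intro closed_Collect_eq cont continuous_on_const)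
  have sK: "csubspace K" unfolding K_def csubspace_def
  proof (intro conjI ballI allI)
    show "0 \<in> {x. f x = 0}" using f0 by simp
    show "x + y \<in> {x. f x = 0}" if "x \<in> {x. f x = 0}" "y \<in> {x. f x = 0}" for x y
      using that add[of x y] by simp
    show "cscale c x \<in> {x. f x = 0}" if "x \<in> {x. f x = 0}" for c x
      using that sc[of c x] by simp
  qed
  define w where "w = x0 - proj K x0"
  have pK: "proj K x0 \<in> K" using proj_prop[OF clK sK] by blast
  hence "f (proj K x0) = 0" by (simp add: K_def)
  hence fw: "f w = f x0" unfolding w_def fminus by simp
  have wK: "\<And>s. s \<in> K \<Longrightarrow> cinner w s = 0" using proj_prop[OF clK sK] unfolding w_def by blast
  have w0: "w \<noteq> 0" using fw x0 f0 by auto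
  define n where "n = cinner w w"
  have n0: "n \<noteq> 0" using w0 by (simp add: n_def)
  define z where "z = cscale (cnj (f w / n)) w"
  have "f x = cinner x z" for x
  proof -
    define c where "c = f x / f w"
    have "f (x - cscale c w) = f x - c * f w" by (simp add: fminus sc)
    also have "\<dots> = 0" using x0 fw by (simp add: c_def)
    finally have inK: "x - cscale c w \<in> K" by (simp add: K_def)
    have "cinner w (x - cscale c w) = 0" using wK[OF inK] .
    hence "cinner (x - cscale c w) w = 0" using cinner_commute[of "x - cscale c w" w] by simp
    hence xw: "cinner x w = c * n" by (simp add: cinner_diff_left cinner_cscale_left n_def)
    have "cinner x z = f w / n * cinner x w" by (simp add: z_def cinner_cscale_right)
    also have "\<dots> = f w / n * (f x / f w * n)" by (simp add: xw c_def)
    also have "\<dots> = f x" using n0 x0 fw by simp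
    finally show ?thesis by simp
  qed
  thus ?thesis by blast
qed

lemma adj_unique:
  assumes "\<And>x y. cinner (T x) y = cinner x (S y)"
  shows "adj T = S"
  unfolding adj_def
proof (rule the_equality)
  show "\<forall>x y. cinner (T x) y = cinner x (S y)" using assms by blast
  fix S' assume "\<forall>x y. cinner (T x) y = cinner x (S' y)"
  hence "\<And>x y. cinner x (S' y) = cinner x (S y)" using assms by metis
  thus "S' = S" by (intro ext cinner_ext) 
qed

lemma adj_exists:
  fixes T :: "'a::chilbert_space \<Rightarrow> 'a"
  assumes T: "bounded_op T"
  shows "cinner (T x) y = cinner x (adj T y)"
proof -
  have "\<forall>y. \<exists>z. \<forall>x. cinner (T x) y = cinner x z"
  proof
    fix y
    show "\<exists>z. \<forall>x. cinner (T x) y = cinner x z"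
    proof (rule riesz)
      show "cinner (T (x + x')) y = cinner (T x) y + cinner (T x') y" for x x'
        by (simp add: bop_add[OF T] cinner_add_left)
      show "cinner (T (cscale c x)) y = c * cinner (T x) y" for c x
        by (simp add: bop_cscale[OF T] cinner_cscale_left)
      have "bounded_linear (\<lambda>x. cinner (T x) y)"
        using bounded_linear_compose[OF bounded_linear_cinner_left bop_bl[OF T]] by (simp add: o_def)
      thus "continuous_on UNIV (\<lambda>x. cinner (T x) y)" by (simp add: linear_continuous_on)
    qed
  qed
  then obtain S where S: "\<And>x y. cinner (T x) y = cinner x (S y)" by metis
  have "adj T = S" by (rule adj_unique) (rule S)
  thus ?thesis using S by simp
qed

lemma commute_iff:
  fixes Q :: "'a::chilbert_space \<Rightarrow> 'a"
  assumes Q: "bounded_op Q"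
  shows "(A \<circ> Q = adj Q \<circ> A) \<longleftrightarrow> (\<forall>x z. cinner z (A (Q x)) = cinner (Q z) (A x))"
proof
  assume "A \<circ> Q = adj Q \<circ> A"
  hence "\<And>x. A (Q x) = adj Q (A x)" by (simp add: fun_eq_iff)
  thus "\<forall>x z. cinner z (A (Q x)) = cinner (Q z) (A x)" by (simp add: adj_exists[OF Q])
next
  assume h: "\<forall>x z. cinner z (A (Q x)) = cinner (Q z) (A x)"
  show "A \<circ> Q = adj Q \<circ> A"
  proof
    fix x
    show "(A \<circ> Q) x = (adj Q \<circ> A) x"
    proof -
      have "\<And>z. cinner z (A (Q x)) = cinner z (adj Q (A x))" using h by (simp add: adj_exists[OF Q])
      hence "A (Q x) = adj Q (A x)" by (rule cinner_ext)
      thus ?thesis by simp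
    qed
  qed
qed


lemma om_baire:
  fixes f :: "'a::banach \<Rightarrow> 'b::banach"
  assumes surj: "surj f"
  shows "\<exists>m::nat. interior (closure (f ` ball 0 (real (Suc m)))) \<noteq> {}"
proof (rule ccontr)
  assume "\<not> ?thesis"
  hence e: "\<And>m. interior (closure (f ` ball 0 (real (Suc m)))) = {}" by blast
  define G where "G = range (\<lambda>m. closure (f ` ball 0 (real (Suc m))))"
  have "euclidean interior_of \<Union>G = {}"
  proof (rule Baire_category_alt)
    show "completely_metrizable_space (euclidean :: 'b topology) \<or>
          locally_compact_space (euclidean :: 'b topology) \<and> regular_space (euclidean :: 'b topology)"
      using completely_metrizable_space_euclidean by blast
    show "countable G" unfolding G_def by simp
    fix T assume "T \<in> G"
    then obtain m where T: "T = closure (f ` ball 0 (real (Suc m)))" unfolding G_def by blast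
    have "closedin euclidean T" unfolding T closed_closedin[symmetric] by simp
    moreover have "euclidean interior_of T = {}" unfolding T euclidean_interior_of by (rule e)
    ultimately show "closedin euclidean T \<and> euclidean interior_of T = {}" by blast
  qed
  moreover have "\<Union>G = UNIV"
  proof -
    have "y \<in> \<Union>G" for y
    proof -
      obtain x where x: "y = f x" using surjD[OF surj] by blast
      obtain m::nat where m0: "norm x < real m" using reals_Archimedean2 by blast
      hence m: "norm x < real (Suc m)" by simp
      have "x \<in> ball 0 (real (Suc m))" using m by simp
      hence "y \<in> f ` ball 0 (real (Suc m))" unfolding x by (rule imageI)
      hence "y \<in> closure (f ` ball 0 (real (Suc m)))" by (rule subsetD[OF closure_subset])
      moreover have "closure (f ` ball 0 (real (Suc m))) \<in> G" unfolding G_def by blast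
      ultimately show ?thesis by blast
    qed
    thus ?thesis by blast
  qed
  ultimately have "interior (UNIV::'b set) = {}" by simp
  thus False by simp
qed

lemma om_approx:
  fixes f :: "'a::banach \<Rightarrow> 'b::banach"
  assumes bl: "bounded_linear f" and surj: "surj f"
  shows "\<exists>k>0. \<forall>y e. e > 0 \<longrightarrow> (\<exists>x. norm x \<le> k * norm y \<and> norm (f x - y) < e)"
proof -
  interpret f: bounded_linear f by (rule bl)
  obtain m where "interior (closure (f ` ball 0 (real (Suc m)))) \<noteq> {}" using om_baire[OF surj] by blast
  then obtain y0 where "y0 \<in> interior (closure (f ` ball 0 (real (Suc m))))" by blast
  then obtain r where r: "r > 0" and br: "ball y0 r \<subseteq> closure (f ` ball 0 (real (Suc m)))"
    using mem_interior by blast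
  define M where "M = real (Suc m)"
  have M: "M > 0" by (simp add: M_def)
  have small: "\<exists>x. norm x < 2 * M \<and> norm (f x - y) < e" if y: "norm y < r" and e: "e > 0" for y e
  proof -
    have "y0 + y \<in> closure (f ` ball 0 M)" using br y by (auto simp: M_def dist_norm)
    then obtain za where "za \<in> f ` ball 0 M" "dist za (y0 + y) < e / 2"
      using closure_approachable[of "y0 + y"] e half_gt_zero by blast
    then obtain a where a: "a \<in> ball 0 M" "dist (f a) (y0 + y) < e / 2" by blast
    have "y0 \<in> closure (f ` ball 0 M)" using br r by (auto simp: M_def)
    then obtain zb where "zb \<in> f ` ball 0 M" "dist zb y0 < e / 2"
      using closure_approachable[of y0] e half_gt_zero by blast
    then obtain b where b: "b \<in> ball 0 M" "dist (f b) y0 < e / 2" by blast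
    have "norm (a - b) \<le> norm a + norm b" by (rule norm_triangle_ineq4)
    hence n: "norm (a - b) < 2 * M" using a(1) b(1) by simp
    have eq: "f (a - b) - y = (f a - (y0 + y)) - (f b - y0)" by (simp add: f.diff)
    have "norm (f (a - b) - y) \<le> norm (f a - (y0 + y)) + norm (f b - y0)"
      unfolding eq by (rule norm_triangle_ineq4)
    also have "\<dots> < e" using a(2) b(2) by (simp add: dist_norm)
    finally show ?thesis using n by blast
  qed
  define k where "k = 4 * M / r"
  have k: "k > 0" using M r by (simp add: k_def)
  have "\<exists>x. norm x \<le> k * norm y \<and> norm (f x - y) < e" if e: "e > 0" for y e
  proof (cases "y = 0")
    case True thus ?thesis using e by (intro exI[of _ 0]) simp
  next
    case False
    define t where "t = r / (2 * norm y)"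
    have t: "t > 0" using False r by (simp add: t_def)
    have "norm (scaleR t y) < r" using False r by (simp add: t_def)
    moreover have "e * t > 0" using t e by simp
    ultimately obtain x' where x': "norm x' < 2 * M" "norm (f x' - scaleR t y) < e * t"
      using small by blast
    define x where "x = scaleR (inverse t) x'"
    have "norm x = inverse t * norm x'" using t by (simp add: x_def)
    also have "\<dots> \<le> inverse t * (2 * M)" using x' t by (simp add: less_imp_le)
    also have "\<dots> = k * norm y" using False r by (simp add: t_def k_def field_simps)
    finally have nx: "norm x \<le> k * norm y" .
    have "f x - y = scaleR (inverse t) (f x' - scaleR t y)" using t by (simp add: x_def f.scaleR algebra_simps)
    hence "norm (f x - y) = inverse t * norm (f x' - scaleR t y)" using t by simp
    also have "\<dots> < inverse t * (e * t)" using x'(2) t by simp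
    also have "\<dots> = e" using t by simp
    finally show ?thesis using nx by blast
  qed
  thus ?thesis using k by blast
qed

lemma open_mapping:
  fixes f :: "'a::banach \<Rightarrow> 'b::banach"
  assumes bl: "bounded_linear f" and surj: "surj f"
  shows "\<exists>c>0. \<forall>y. \<exists>x. f x = y \<and> norm x \<le> c * norm y"
proof -
  interpret f: bounded_linear f by (rule bl)
  obtain k where k: "k > 0" and ap: "\<And>y e. e > 0 \<Longrightarrow> \<exists>x. norm x \<le> k * norm y \<and> norm (f x - y) < e"
    using om_approx[OF bl surj] by blast
  define g where "g y e = (SOME x. norm x \<le> k * norm y \<and> norm (f x - y) < e)" for y e
  have g: "norm (g y e) \<le> k * norm y \<and> norm (f (g y e) - y) < e" if "e > 0" for y e
    unfolding g_def using someI_ex[OF ap[OF that]] .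
  have "\<exists>x. f x = y \<and> norm x \<le> (2 * k) * norm y" for y
  proof (cases "y = 0")
    case True thus ?thesis by (intro exI[of _ 0]) (simp add: f.zero)
  next
    case False
    define ny where "ny = norm y"
    have ny: "ny > 0" using False by (simp add: ny_def)
    define eps where "eps j = ny / 2 ^ Suc j" for j :: nat
    have eps: "eps j > 0" for j using ny by (simp add: eps_def)
    define ys where "ys = rec_nat y (\<lambda>j v. v - f (g v (eps j)))"
    define xs where "xs j = g (ys j) (eps j)" for j
    have ys0: "ys 0 = y" by (simp add: ys_def)
    have ysS: "ys (Suc j) = ys j - f (xs j)" for j by (simp add: ys_def xs_def)
    have xsb: "norm (xs j) \<le> k * norm (ys j)" and ysb: "norm (ys (Suc j)) < eps j" for j
      using g[OF eps[of j], of "ys j"] by (simp_all add: xs_def ysS norm_minus_commute)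
    have ysb': "norm (ys j) \<le> ny / 2 ^ j" for j
    proof (cases j)
      case 0 thus ?thesis by (simp add: ys0 ny_def)
    next
      case (Suc i) thus ?thesis using ysb[of i] by (simp add: eps_def)
    qed
    have xsb': "norm (xs j) \<le> k * ny * (1/2) ^ j" for j
    proof -
      have "k * norm (ys j) \<le> k * (ny / 2 ^ j)" using ysb'[of j] k by (intro mult_left_mono) auto
      hence "norm (xs j) \<le> k * (ny / 2 ^ j)" using xsb[of j] by linarith
      thus ?thesis by (simp add: power_one_over)
    qed
    have sg: "summable (\<lambda>j. k * ny * (1/2::real) ^ j)"
      by (intro summable_mult summable_geometric) simp
    have sn: "summable (\<lambda>j. norm (xs j))"
      by (rule summable_comparison_test[OF _ sg]) (use xsb' in simp)
    have sx: "summable xs" using summable_norm_cancel[OF sn] .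
    have psum: "(\<Sum>j<n. f (xs j)) = y - ys n" for n
      by (induction n) (simp_all add: ys0 ysS)
    have ys_lim: "ys \<longlonglongrightarrow> 0"
    proof (rule tendsto_norm_zero_cancel)
      have "(\<lambda>j. ny * (1/2::real) ^ j) \<longlonglongrightarrow> ny * 0"
        by (intro tendsto_intros LIMSEQ_power_zero) simp
      hence l: "(\<lambda>j. ny * (1/2::real) ^ j) \<longlonglongrightarrow> 0" by simp
      have "norm (norm (ys j)) \<le> ny * (1/2) ^ j" for j
        using ysb'[of j] by (simp add: power_one_over)
      hence ev: "\<forall>\<^sub>F j in sequentially. norm (norm (ys j)) \<le> ny * (1/2) ^ j" by (intro always_eventually) blast
      show "(\<lambda>j. norm (ys j)) \<longlonglongrightarrow> 0" by (rule Lim_null_comparison[OF ev l])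
    qed
    have "(\<lambda>j. f (xs j)) sums y"
    proof -
      have "(\<lambda>n. y - ys n) \<longlonglongrightarrow> y - 0" by (intro tendsto_intros ys_lim)
      thus ?thesis unfolding sums_def psum by simp
    qed
    hence su: "y = (\<Sum>j. f (xs j))" by (rule sums_unique)
    have fx: "f (suminf xs) = y" unfolding su by (rule f.suminf[OF sx])
    have "norm (suminf xs) \<le> (\<Sum>j. norm (xs j))" by (rule summable_norm[OF sn])
    also have "\<dots> \<le> (\<Sum>j. k * ny * (1/2::real) ^ j)" by (rule suminf_le[OF xsb' sn sg])
    also have "\<dots> = k * ny * 2"
      using suminf_mult[of "\<lambda>j. (1/2::real)^j" "k * ny"] suminf_geometric[of "1/2::real"] by simp
    finally have "norm (suminf xs) \<le> 2 * k * norm y" by (simp add: ny_def)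
    thus ?thesis using fx by blast
  qed
  thus ?thesis using k by (intro exI[of _ "2*k"]) simp
qed


lemma pi_orth:
  fixes A :: "'a::chilbert_space \<Rightarrow> 'a"
  assumes A: "positive_op A" and S: "csubspace S" and T: "T \<in> PiSet A S" and s: "s \<in> S"
  shows "cinner (A (y - T y)) s = 0"
proof (rule variational[OF A S s])
  fix s assume s: "s \<in> S"
  have TyS: "T y \<in> S" using T by (auto simp: PiSet_def)
  have "Anorm A (y - T y) \<le> Anorm A (y - (T y + s))"
    using T csub_add[OF S TyS s] unfolding PiSet_def by blast
  moreover have "y - (T y + s) = (y - T y) - s" by simp
  ultimately have "Anorm A (y - T y) \<le> Anorm A ((y - T y) - s)" by simp
  thus "Re (cinner (A (y - T y)) (y - T y)) \<le> Re (cinner (A (y - T y - s)) (y - T y - s))"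
    unfolding Anorm_def by simp
qed

lemma orth_pi:
  fixes A Q :: "'a::chilbert_space \<Rightarrow> 'a"
  assumes A: "positive_op A" and S: "csubspace S" and Q: "bounded_op Q" and rQ: "range Q \<subseteq> S"
    and orth: "\<And>y s. s \<in> S \<Longrightarrow> cinner (A (y - Q y)) s = 0"
  shows "Q \<in> PiSet A S"
proof -
  have bA: "bounded_op A" using A by (simp add: positive_op_def)
  have "Anorm A (y - Q y) \<le> Anorm A (y - s)" if s: "s \<in> S" for y s
  proof -
    define u where "u = y - Q y"
    define w where "w = Q y - s"
    have wS: "w \<in> S" unfolding w_def using rQ s csub_diff[OF S] by blast
    have e: "y - s = u + w" by (simp add: u_def w_def)
    have uw: "cinner (A u) w = 0" unfolding u_def using orth[OF wS] .
    have wu: "cinner (A w) u = 0"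
      using positive_herm[OF A, of w u] cinner_commute[of w "A u"] uw by simp
    have "cinner (A (u + w)) (u + w) = cinner (A u) u + cinner (A u) w + cinner (A w) u + cinner (A w) w"
      by (simp add: bop_add[OF bA] cinner_add_left cinner_add_right)
    hence "Re (cinner (A (y - s)) (y - s)) = Re (cinner (A u) u) + Re (cinner (A w) w)"
      unfolding e using uw wu by simp
    moreover have "0 \<le> Re (cinner (A w) w)" using positive_Re[OF A] .
    ultimately have "Re (cinner (A u) u) \<le> Re (cinner (A (y - s)) (y - s))" by linarith
    thus ?thesis unfolding Anorm_def u_def by simp
  qed
  thus ?thesis unfolding PiSet_def using Q rQ by blast
qed

lemma idem_on_range:
  assumes "Q \<circ> Q = Q" "s \<in> range Q" shows "Q s = s"
proof -
  obtain t where "s = Q t" using assms(2) by blast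
  thus ?thesis using assms(1) by (metis comp_apply)
qed

lemma compat_orth:
  fixes A Q :: "'a::chilbert_space \<Rightarrow> 'a"
  assumes A: "positive_op A" and Q: "bounded_op Q" and idem: "Q \<circ> Q = Q"
    and com: "A \<circ> Q = adj Q \<circ> A" and s: "s \<in> range Q"
  shows "cinner (A (y - Q y)) s = 0"
proof -
  have bA: "bounded_op A" using A by (simp add: positive_op_def)
  have h: "\<And>x z. cinner z (A (Q x)) = cinner (Q z) (A x)" using com commute_iff[OF Q] by blast
  have Qs: "Q s = s" using idem_on_range[OF idem s] .
  have "cinner s (A (y - Q y)) = cinner s (A y) - cinner s (A (Q y))"
    by (simp add: bop_diff[OF bA] cinner_diff_right)
  also have "cinner s (A (Q y)) = cinner s (A y)" using h[where x=y and z=s] Qs by simp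
  finally have "cinner s (A (y - Q y)) = 0" by simp
  thus ?thesis using cinner_commute[of "A (y - Q y)" s] by simp
qed

lemma orth_compat:
  fixes A Q :: "'a::chilbert_space \<Rightarrow> 'a"
  assumes A: "positive_op A" and Q: "bounded_op Q"
    and orth: "\<And>y s. s \<in> range Q \<Longrightarrow> cinner (A (y - Q y)) s = 0"
  shows "A \<circ> Q = adj Q \<circ> A"
proof -
  have bA: "bounded_op A" using A by (simp add: positive_op_def)
  have "cinner z (A (Q x)) = cinner (Q z) (A x)" for x z
  proof -
    have 1: "cinner (z - Q z) (A (Q x)) = 0"
      using positive_herm[OF A, of "z - Q z" "Q x"] orth[of "Q x" z] by simp
    have 2: "cinner (Q z) (A (x - Q x)) = 0"
      using orth[of "Q z" x] cinner_commute[of "Q z" "A (x - Q x)"] by simp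
    have "cinner z (A (Q x)) = cinner (Q z) (A (Q x)) + cinner (z - Q z) (A (Q x))"
      by (simp add: cinner_diff_left)
    also have "\<dots> = cinner (Q z) (A (Q x))" using 1 by simp
    also have "\<dots> = cinner (Q z) (A x) - cinner (Q z) (A (x - Q x))"
      by (simp add: bop_diff[OF bA] cinner_diff_right)
    also have "\<dots> = cinner (Q z) (A x)" using 2 by simp
    finally show ?thesis .
  qed
  thus ?thesis using commute_iff[OF Q] by blast
qed

lemma compat_pi:
  fixes A Q :: "'a::chilbert_space \<Rightarrow> 'a"
  assumes A: "positive_op A" and Q: "bounded_op Q" and idem: "Q \<circ> Q = Q"
    and com: "A \<circ> Q = adj Q \<circ> A"
  shows "Q \<in> PiSet A (range Q)"
  by (rule orth_pi[OF A csub_range[OF Q] Q]) (use compat_orth[OF A Q idem com] in auto)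

lemma pi_compat:
  fixes A T :: "'a::chilbert_space \<Rightarrow> 'a"
  assumes A: "positive_op A" and cl: "closed S" and S: "csubspace S" and T: "T \<in> PiSet A S"
  shows "compatible A S"
proof -
  define P where "P = proj S"
  have bP: "bounded_op P" unfolding P_def using proj_bop[OF cl S] .
  have PS: "P x \<in> S" for x unfolding P_def using proj_prop[OF cl S] by blast
  have Pid: "s \<in> S \<Longrightarrow> P s = s" for s unfolding P_def using proj_id[OF cl S] .
  have bT: "bounded_op T" and TS: "\<And>x. T x \<in> S" using T by (auto simp: PiSet_def)
  define Q where "Q = (\<lambda>x. T x + (P x - T (P x)))"
  have bTP: "bounded_op (\<lambda>x. T (P x))" by (rule bop_comp[OF bT bP])
  have bQ: "bounded_op Q" unfolding Q_def
    by (rule bop_plus[OF bT bop_sub[OF bP bTP]])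
  have QS: "Q x \<in> S" for x unfolding Q_def
    by (rule csub_add[OF S TS csub_diff[OF S PS TS]])
  have Qid: "s \<in> S \<Longrightarrow> Q s = s" for s unfolding Q_def using Pid by simp
  have idem: "Q \<circ> Q = Q" using QS Qid by (simp add: fun_eq_iff)
  have rQ: "range Q = S"
  proof
    show "range Q \<subseteq> S" using QS by blast
    show "S \<subseteq> range Q"
    proof
      fix s assume "s \<in> S"
      hence "s = Q s" using Qid by simp
      thus "s \<in> range Q" by (rule ssubst) (rule rangeI)
    qed
  qed
  have orth: "cinner (A (y - Q y)) s = 0" if "s \<in> range Q" for y s
  proof -
    have e: "y - Q y = (y - P y) - T (y - P y)" unfolding Q_def by (simp add: bop_diff[OF bT])
    have "s \<in> S" using that rQ by simp
    thus ?thesis unfolding e by (rule pi_orth[OF A S T])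
  qed
  have "A \<circ> Q = adj Q \<circ> A" by (rule orth_compat[OF A bQ orth])
  thus ?thesis unfolding compatible_def using bQ idem rQ by blast
qed

lemma commute_compl:
  fixes A Q :: "'a::chilbert_space \<Rightarrow> 'a"
  assumes A: "positive_op A" and Q: "bounded_op Q" and com: "A \<circ> Q = adj Q \<circ> A"
  shows "A \<circ> (\<lambda>x. x - Q x) = adj (\<lambda>x. x - Q x) \<circ> A"
proof -
  have bA: "bounded_op A" using A by (simp add: positive_op_def)
  have h: "\<And>x z. cinner z (A (Q x)) = cinner (Q z) (A x)" using com commute_iff[OF Q] by blast
  have Q': "bounded_op (\<lambda>x. x - Q x)" by (intro bop_sub bop_id Q)
  have "cinner z (A (x - Q x)) = cinner (z - Q z) (A x)" for x z
    using h[where x=x and z=z] by (simp add: bop_diff[OF bA] cinner_diff_right cinner_diff_left)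
  thus ?thesis using commute_iff[OF Q'] by blast
qed


instance chilbert_space \<subseteq> banach ..

lemma proj_compl_norm:
  fixes S :: "'a::chilbert_space set"
  assumes cl: "closed S" and S: "csubspace S"
  shows "norm (x - proj S x) \<le> norm x"
proof -
  have P: "proj S x \<in> S" "cinner (x - proj S x) (proj S x) = 0" using proj_prop[OF cl S] by blast+
  have o: "cinner (proj S x) (x - proj S x) = 0" using P(2) cinner_commute[of "proj S x" "x - proj S x"] by simp
  have "(norm x)^2 = (norm (proj S x + (x - proj S x)))^2" by simp
  also have "\<dots> = (norm (proj S x))^2 + (norm (x - proj S x))^2 + 2 * Re (cinner (proj S x) (x - proj S x))"
    by (rule norm_add_sq)
  finally have "(norm (x - proj S x))^2 \<le> (norm x)^2" using o by simp
  thus ?thesis by (simp add: power2_le_iff_abs_le)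
qed

lemma proj_norm:
  fixes S :: "'a::chilbert_space set"
  assumes cl: "closed S" and S: "csubspace S"
  shows "norm (proj S x) \<le> norm x"
proof -
  have P: "proj S x \<in> S" "cinner (x - proj S x) (proj S x) = 0" using proj_prop[OF cl S] by blast+
  have o: "cinner (proj S x) (x - proj S x) = 0" using P(2) cinner_commute[of "proj S x" "x - proj S x"] by simp
  have "(norm x)^2 = (norm (proj S x + (x - proj S x)))^2" by simp
  also have "\<dots> = (norm (proj S x))^2 + (norm (x - proj S x))^2 + 2 * Re (cinner (proj S x) (x - proj S x))"
    by (rule norm_add_sq)
  finally have "(norm (proj S x))^2 \<le> (norm x)^2" using o by simp
  thus ?thesis by (simp add: power2_le_iff_abs_le)
qed

lemma inner_inverse:
  fixes B :: "'a::chilbert_space \<Rightarrow> 'a"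
  assumes bB: "bounded_op B" and clR: "closed (range B)"
  shows "\<exists>D. bounded_op D \<and> (\<forall>x. B (D (B x)) = B x)"
proof -
  define R where "R = range B"
  have sR: "csubspace R" unfolding R_def by (rule csub_range[OF bB])
  have cR: "closed R" unfolding R_def by (rule clR)
  define N where "N = ker B"
  have sN: "csubspace N" unfolding N_def by (rule csub_ker[OF bB])
  have cN: "closed N" unfolding N_def by (rule closed_ker[OF bB])
  define P where "P = proj R"
  define PN where "PN = proj N"
  have bP: "bounded_op P" unfolding P_def by (rule proj_bop[OF cR sR])
  have bPN: "bounded_op PN" unfolding PN_def by (rule proj_bop[OF cN sN])
  have PR: "P y \<in> R" for y unfolding P_def using proj_prop[OF cR sR] by blast
  have PNN: "PN y \<in> N" for y unfolding PN_def using proj_prop[OF cN sN] by blast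
  have Pid: "s \<in> R \<Longrightarrow> P s = s" for s unfolding P_def by (rule proj_id[OF cR sR])
  have PNid: "s \<in> N \<Longrightarrow> PN s = s" for s unfolding PN_def by (rule proj_id[OF cN sN])
  have Porth: "P (z - P z) = 0" for z
    unfolding P_def by (rule proj_orth_zero[OF cR sR]) (use proj_prop[OF cR sR] in blast)
  have BPN: "B (PN x) = 0" for x using PNN[of x] by (simp add: N_def ker_def)
  define F where "F = (\<lambda>p::'a \<times> 'a. B (fst p) + (snd p - P (snd p)))"
  have blF: "bounded_linear F"
  proof -
    have 1: "bounded_linear (\<lambda>p::'a \<times> 'a. B (fst p))"
      using bounded_linear_compose[OF bop_bl[OF bB] bounded_linear_fst] by (simp add: o_def)
    have 2: "bounded_linear (\<lambda>p::'a \<times> 'a. P (snd p))"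
      using bounded_linear_compose[OF bop_bl[OF bP] bounded_linear_snd] by (simp add: o_def)
    have 3: "bounded_linear (\<lambda>p::'a \<times> 'a. snd p - P (snd p))"
      by (rule bounded_linear_sub[OF bounded_linear_snd 2])
    show ?thesis unfolding F_def by (rule bounded_linear_add[OF 1 3])
  qed
  have surjF: "surj F"
  proof -
    have "y \<in> range F" for y
    proof -
      obtain x where x: "P y = B x" using PR[of y] unfolding R_def by blast
      have "F (x, y) = y" unfolding F_def using x by simp
      thus ?thesis by (metis rangeI)
    qed
    thus ?thesis by blast
  qed
  obtain c where c: "c > 0" and om: "\<And>y. \<exists>p. F p = y \<and> norm p \<le> c * norm y"
    using open_mapping[OF blF surjF] by blast
  have pre: "\<exists>x. B x = P y \<and> norm x \<le> c * norm y" for y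
  proof -
    obtain p where p: "F p = P y" "norm p \<le> c * norm (P y)" using om by blast
    obtain x z where pxz: "p = (x, z)" by (cases p)
    have BR: "B x \<in> R" unfolding R_def by simp
    have "P (F p) = P (P y)" using p(1) by simp
    hence "P (B x) + P (z - P z) = P y" unfolding pxz F_def using Pid[OF PR[of y]] by (simp add: bop_add[OF bP])
    hence Bx: "B x = P y" using Pid[OF BR] Porth[of z] by simp
    have "norm x \<le> norm p" unfolding pxz by (rule norm_fst_le)
    also have "\<dots> \<le> c * norm (P y)" by (rule p(2))
    also have "\<dots> \<le> c * norm y"
    proof -
      have "norm (P y) \<le> norm y" unfolding P_def by (rule proj_norm[OF cR sR])
      thus ?thesis using c by simp
    qed
    finally show ?thesis using Bx by blast
  qed
  define D where "D y = (SOME x. B x = P y) - PN (SOME x. B x = P y)" for y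
  have Dchar: "D y = x - PN x" if x: "B x = P y" for x y
  proof -
    define x0 where "x0 = (SOME x. B x = P y)"
    have x0: "B x0 = P y" unfolding x0_def using x by (rule someI)
    have "B (x0 - x) = 0" using x0 x by (simp add: bop_diff[OF bB])
    hence "x0 - x \<in> N" by (simp add: N_def ker_def)
    hence "PN (x0 - x) = x0 - x" by (rule PNid)
    hence "PN x0 - PN x = x0 - x" by (simp add: bop_diff[OF bPN])
    hence "x0 - PN x0 = x - PN x" by (simp add: algebra_simps)
    thus ?thesis unfolding D_def x0_def by simp
  qed
  have Dadd: "D (y1 + y2) = D y1 + D y2" for y1 y2
  proof -
    obtain x1 where x1: "B x1 = P y1" using pre by blast
    obtain x2 where x2: "B x2 = P y2" using pre by blast
    have "B (x1 + x2) = P (y1 + y2)" using x1 x2 by (simp add: bop_add[OF bB] bop_add[OF bP])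
    hence "D (y1 + y2) = (x1 + x2) - PN (x1 + x2)" by (rule Dchar)
    also have "\<dots> = (x1 - PN x1) + (x2 - PN x2)" by (simp add: bop_add[OF bPN])
    also have "\<dots> = D y1 + D y2" using Dchar[OF x1] Dchar[OF x2] by simp
    finally show ?thesis .
  qed
  have Dsc: "D (cscale a y) = cscale a (D y)" for a y
  proof -
    obtain x where x: "B x = P y" using pre by blast
    have "B (cscale a x) = P (cscale a y)" using x by (simp add: bop_cscale[OF bB] bop_cscale[OF bP])
    hence "D (cscale a y) = cscale a x - PN (cscale a x)" by (rule Dchar)
    also have "\<dots> = cscale a (x - PN x)" by (simp add: bop_cscale[OF bPN] cscale_diff_right)
    also have "\<dots> = cscale a (D y)" using Dchar[OF x] by simp
    finally show ?thesis .
  qed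
  have Dnorm: "norm (D y) \<le> norm y * c" for y
  proof -
    obtain x where x: "B x = P y" "norm x \<le> c * norm y" using pre by blast
    have "norm (D y) = norm (x - PN x)" using Dchar[OF x(1)] by simp
    also have "\<dots> \<le> norm x" unfolding PN_def by (rule proj_compl_norm[OF cN sN])
    finally show ?thesis using x(2) by (simp add: mult.commute)
  qed
  have bD: "bounded_op D" unfolding bounded_op_def using Dadd Dsc Dnorm by blast
  have "B (D (B x)) = B x" for x
  proof -
    obtain x' where x': "B x' = P (B x)" using pre by blast
    have "B (D (B x)) = B (x' - PN x')" using Dchar[OF x'] by simp
    also have "\<dots> = P (B x)" using x' BPN[of x'] by (simp add: bop_diff[OF bB])
    also have "\<dots> = B x" by (rule Pid) (simp add: R_def)
    finally show ?thesis .
  qed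
  thus ?thesis using bD by blast
qed


lemma three_implies:
  fixes A1 A2 B C :: "'a::chilbert_space \<Rightarrow> 'a"
  assumes A1: "positive_op A1" and A2: "positive_op A2" and bB: "bounded_op B"
    and bC: "bounded_op C" and BCB: "B \<circ> C \<circ> B = B"
    and e1: "A1 \<circ> (B \<circ> C) = adj (B \<circ> C) \<circ> A1"
    and e2: "A2 \<circ> (C \<circ> B) = adj (C \<circ> B) \<circ> A2"
  shows "compatible A1 (range B) \<and> compatible A2 (ker B)
       \<and> B \<circ> C \<in> PiSet A1 (range B) \<and> (\<lambda>x. x - C (B x)) \<in> PiSet A2 (ker B)"
proof -
  have bcb: "B (C (B x)) = B x" for x using BCB by (simp add: fun_eq_iff)
  have C0: "C 0 = 0" by (rule bop_zero[OF bC])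
  define Q1 where "Q1 = B \<circ> C"
  have bQ1: "bounded_op Q1" unfolding Q1_def by (rule bop_comp'[OF bB bC])
  have idem1: "Q1 \<circ> Q1 = Q1" unfolding Q1_def by (simp add: fun_eq_iff bcb)
  have r1: "range Q1 = range B"
  proof
    show "range Q1 \<subseteq> range B" unfolding Q1_def by auto
    show "range B \<subseteq> range Q1"
    proof
      fix y assume "y \<in> range B"
      then obtain x where x: "y = B x" by blast
      have "y = Q1 (B x)" unfolding Q1_def x by (simp add: bcb)
      thus "y \<in> range Q1" by simp
    qed
  qed
  have c1: "compatible A1 (range B)"
    unfolding compatible_def using bQ1 idem1 r1 e1 unfolding Q1_def by blast
  have p1: "B \<circ> C \<in> PiSet A1 (range B)"
    using compat_pi[OF A1 bQ1 idem1] e1 r1 unfolding Q1_def by simp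
  define Q2 where "Q2 = (\<lambda>x. x - C (B x))"
  have bCB: "bounded_op (C \<circ> B)" by (rule bop_comp'[OF bC bB])
  have bQ2: "bounded_op Q2" unfolding Q2_def by (rule bop_sub[OF bop_id bop_comp[OF bC bB]])
  have BQ2: "B (Q2 x) = 0" for x unfolding Q2_def by (simp add: bop_diff[OF bB] bcb)
  have idem2: "Q2 \<circ> Q2 = Q2"
  proof
    fix x show "(Q2 \<circ> Q2) x = Q2 x" using BQ2[of x] C0 by (simp add: Q2_def)
  qed
  have r2: "range Q2 = ker B"
  proof
    show "range Q2 \<subseteq> ker B" using BQ2 by (auto simp: ker_def)
    show "ker B \<subseteq> range Q2"
    proof
      fix n assume "n \<in> ker B"
      hence "B n = 0" by (simp add: ker_def)
      hence "n = Q2 n" using C0 by (simp add: Q2_def)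
      thus "n \<in> range Q2" by (rule ssubst) (rule rangeI)
    qed
  qed
  have e2': "A2 \<circ> Q2 = adj Q2 \<circ> A2"
    using commute_compl[OF A2 bCB e2] unfolding Q2_def by (simp add: o_def)
  have c2: "compatible A2 (ker B)"
    unfolding compatible_def using bQ2 idem2 r2 e2' by blast
  have p2: "(\<lambda>x. x - C (B x)) \<in> PiSet A2 (ker B)"
    using compat_pi[OF A2 bQ2 idem2 e2'] r2 unfolding Q2_def by simp
  show ?thesis using c1 c2 p1 p2 by blast
qed

lemma two_implies_three:
  fixes A1 A2 B :: "'a::chilbert_space \<Rightarrow> 'a"
  assumes A1: "positive_op A1" and A2: "positive_op A2" and bB: "bounded_op B"
    and clR: "closed (range B)"
    and c1: "compatible A1 (range B)" and c2: "compatible A2 (ker B)"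
  shows "\<exists>C. bounded_op C \<and> B \<circ> C \<circ> B = B \<and> C \<circ> B \<circ> C = C
                \<and> A1 \<circ> (B \<circ> C) = adj (B \<circ> C) \<circ> A1
                \<and> A2 \<circ> (C \<circ> B) = adj (C \<circ> B) \<circ> A2"
proof -
  obtain Q1 where bQ1: "bounded_op Q1" and idem1: "Q1 \<circ> Q1 = Q1" and r1: "range Q1 = range B"
    and e1: "A1 \<circ> Q1 = adj Q1 \<circ> A1" using c1 unfolding compatible_def by blast
  obtain Q2 where bQ2: "bounded_op Q2" and idem2: "Q2 \<circ> Q2 = Q2" and r2: "range Q2 = ker B"
    and e2: "A2 \<circ> Q2 = adj Q2 \<circ> A2" using c2 unfolding compatible_def by blast
  obtain D where bD: "bounded_op D" and BDB: "\<And>x. B (D (B x)) = B x"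
    using inner_inverse[OF bB clR] by blast
  have Q1id: "Q1 (B x) = B x" for x using idem_on_range[OF idem1] r1 by simp
  have BQ2: "B (Q2 v) = 0" for v
  proof -
    have "Q2 v \<in> ker B" using r2 by blast
    thus ?thesis by (simp add: ker_def)
  qed
  have Q2id: "B n = 0 \<Longrightarrow> Q2 n = n" for n using idem_on_range[OF idem2] r2 by (simp add: ker_def)
  have Q1B: "\<exists>x. Q1 y = B x" for y using r1 by blast
  define C where "C = (\<lambda>y. D (Q1 y) - Q2 (D (Q1 y)))"
  have bDQ1: "bounded_op (\<lambda>y. D (Q1 y))" by (rule bop_comp[OF bD bQ1])
  have bC: "bounded_op C" unfolding C_def by (rule bop_sub[OF bDQ1 bop_comp[OF bQ2 bDQ1]])
  have BC: "B (C y) = Q1 y" for y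
  proof -
    obtain x where x: "Q1 y = B x" using Q1B by blast
    show ?thesis unfolding C_def using BQ2 BDB[of x] x by (simp add: bop_diff[OF bB])
  qed
  have CB: "C (B x) = x - Q2 x" for x
  proof -
    define v where "v = D (B x) - x"
    have "B v = 0" unfolding v_def by (simp add: bop_diff[OF bB] BDB)
    hence Qv: "Q2 v = v" by (rule Q2id)
    have Dx: "D (B x) = x + v" by (simp add: v_def)
    have "C (B x) = D (B x) - Q2 (D (B x))" unfolding C_def by (simp add: Q1id)
    also have "\<dots> = (x + v) - (Q2 x + v)" unfolding Dx by (simp add: bop_add[OF bQ2] Qv)
    also have "\<dots> = x - Q2 x" by simp
    finally show ?thesis .
  qed
  have Q2C: "Q2 (C y) = 0" for y
  proof -
    have "Q2 (Q2 (D (Q1 y))) = Q2 (D (Q1 y))" using idem2 by (simp add: fun_eq_iff)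
    thus ?thesis unfolding C_def by (simp add: bop_diff[OF bQ2])
  qed
  have BCB: "B \<circ> C \<circ> B = B" by (simp add: fun_eq_iff BC Q1id)
  have CBC: "C \<circ> B \<circ> C = C" by (simp add: fun_eq_iff CB Q2C)
  have eBC: "B \<circ> C = Q1" by (simp add: fun_eq_iff BC)
  have eCB: "C \<circ> B = (\<lambda>x. x - Q2 x)" by (simp add: fun_eq_iff CB)
  have E1: "A1 \<circ> (B \<circ> C) = adj (B \<circ> C) \<circ> A1" unfolding eBC by (rule e1)
  have E2: "A2 \<circ> (C \<circ> B) = adj (C \<circ> B) \<circ> A2" unfolding eCB by (rule commute_compl[OF A2 bQ2 e2])
  show ?thesis using bC BCB CBC E1 E2 by blast
qed

theorem mainTheorem19:
  fixes A1 A2 B :: "'a::chilbert_space \<Rightarrow> 'a"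
  assumes "separable_space TYPE('a)"
    and "positive_op A1" and "positive_op A2"
    and "bounded_op B" and "closed (range B)"
  shows "((\<exists>G. bounded_op G \<and> B \<circ> G \<in> PiSet A1 (range B)
                \<and> (\<lambda>x. x - G (B x)) \<in> PiSet A2 (ker B))
          \<longleftrightarrow> (compatible A1 (range B) \<and> compatible A2 (ker B)))
       \<and> ((compatible A1 (range B) \<and> compatible A2 (ker B))
          \<longleftrightarrow> (\<exists>C. bounded_op C \<and> B \<circ> C \<circ> B = B \<and> C \<circ> B \<circ> C = C
                \<and> A1 \<circ> (B \<circ> C) = adj (B \<circ> C) \<circ> A1
                \<and> A2 \<circ> (C \<circ> B) = adj (C \<circ> B) \<circ> A2))"
proof -
  note A1 = assms(2) and A2 = assms(3) and bB = assms(4) and clR = assms(5)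
  have sR: "csubspace (range B)" by (rule csub_range[OF bB])
  have sN: "csubspace (ker B)" by (rule csub_ker[OF bB])
  have cN: "closed (ker B)" by (rule closed_ker[OF bB])
  let ?P1 = "\<exists>G. bounded_op G \<and> B \<circ> G \<in> PiSet A1 (range B) \<and> (\<lambda>x. x - G (B x)) \<in> PiSet A2 (ker B)"
  let ?P2 = "compatible A1 (range B) \<and> compatible A2 (ker B)"
  let ?P3 = "\<exists>C. bounded_op C \<and> B \<circ> C \<circ> B = B \<and> C \<circ> B \<circ> C = C
                \<and> A1 \<circ> (B \<circ> C) = adj (B \<circ> C) \<circ> A1
                \<and> A2 \<circ> (C \<circ> B) = adj (C \<circ> B) \<circ> A2"
  have i12: "?P1 \<Longrightarrow> ?P2"
  proof -
    assume ?P1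
    then obtain G where G: "B \<circ> G \<in> PiSet A1 (range B)" "(\<lambda>x. x - G (B x)) \<in> PiSet A2 (ker B)" by blast
    show ?P2 using pi_compat[OF A1 clR sR G(1)] pi_compat[OF A2 cN sN G(2)] by blast
  qed
  have i23: "?P2 \<Longrightarrow> ?P3" using two_implies_three[OF A1 A2 bB clR] by blast
  have i3: "?P3 \<Longrightarrow> ?P1 \<and> ?P2"
  proof -
    assume ?P3
    then obtain C where C: "bounded_op C" "B \<circ> C \<circ> B = B"
      "A1 \<circ> (B \<circ> C) = adj (B \<circ> C) \<circ> A1" "A2 \<circ> (C \<circ> B) = adj (C \<circ> B) \<circ> A2" by blast
    have T: "compatible A1 (range B) \<and> compatible A2 (ker B)
       \<and> B \<circ> C \<in> PiSet A1 (range B) \<and> (\<lambda>x. x - C (B x)) \<in> PiSet A2 (ker B)"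
      by (rule three_implies[OF A1 A2 bB C])
    hence ?P1 using C(1) by blast
    thus "?P1 \<and> ?P2" using T by blast
  qed
  show ?thesis using i12 i23 i3 by blast
qed


end
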